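(* Let $n\in\mathbb{N}$, $\tau\in(0,\infty)$, and let $\mu$ be an isotropic log-concave probability measure on $\mathbb{R}^n$ with density $\rho$ and isotropic constant $1$. Let $m_\rho=\max\rho$ and $K=\{x\in\mathbb{R}^n:\rho(x)\ge e^{-\tau}m_\rho\}$. Then for every $x\in K$, $$|x|^2\le c_n(\tau)(n+1)^2e^\tau,\qquad c_n(\tau)=n\int_1^\infty t^{n-1}e^{-\tau t}\,dt+1.$$
   Context: A log-concave probability measure on $\mathbb{R}^n$ with density $\rho$ means $\rho=e^{-V}$ with $V$ convex. It is isotropic with isotropic constant $L_\mu$ if $\int(x,\theta)\mu(dx)=0$ and $\int(x,\theta)^2\mu(dx)=L_\mu^2|\theta|^2$ for all $\theta\in\mathbb{R}^n$. *)

theory Defs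
  imports "HOL-Probability.Probability"
begin

text \<open>A log-concave density: rho = exp(-V) with V convex and extended-real valued,
  i.e. V = -ln rho on the (convex) support {rho > 0} and V = +infinity outside.\<close>
definition log_concave_density :: "('a::euclidean_space \<Rightarrow> real) \<Rightarrow> bool" where
  "log_concave_density \<rho> \<longleftrightarrow>
     \<rho> \<in> borel_measurable borel \<and> (\<forall>x. 0 \<le> \<rho> x) \<and>
     convex {x. 0 < \<rho> x} \<and> convex_on {x. 0 < \<rho> x} (\<lambda>x. - ln (\<rho> x))"

definition isotropic_with_const :: "'a::euclidean_space measure \<Rightarrow> real \<Rightarrow> bool" where
  "isotropic_with_const \<mu> L \<longleftrightarrow>
     (\<forall>\<theta>::'a. integrable \<mu> (\<lambda>x. x \<bullet> \<theta>) \<and> (\<integral>x. x \<bullet> \<theta> \<partial>\<mu>) = 0 \<and>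
              integrable \<mu> (\<lambda>x. (x \<bullet> \<theta>)\<^sup>2) \<and> (\<integral>x. (x \<bullet> \<theta>)\<^sup>2 \<partial>\<mu>) = L\<^sup>2 * (norm \<theta>)\<^sup>2)"

end

theory Submission
  imports Defs
begin


lemma nn_integral_eucl_affine:
  fixes t :: "'a::euclidean_space" and f :: "'a \<Rightarrow> ennreal"
  assumes [measurable]: "f \<in> borel_measurable borel" and c: "c \<noteq> 0"
  shows "(\<integral>\<^sup>+x. f x \<partial>lborel) = ennreal (\<bar>c\<bar>^DIM('a)) * (\<integral>\<^sup>+x. f (t + c *\<^sub>R x) \<partial>lborel)"
  by (subst lborel_affine[OF c, of t])
     (simp add: nn_integral_density nn_integral_distr nn_integral_cmult)

lemma scale_le:
  fixes t :: "'a::euclidean_space" and F G :: "'a \<Rightarrow> ennreal"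
  assumes [measurable]: "G \<in> borel_measurable borel" and l: "0 < l"
    and le: "\<And>w. F w \<le> G (t + l *\<^sub>R w)"
  shows "ennreal (l^DIM('a)) * (\<integral>\<^sup>+x. F x \<partial>lborel) \<le> (\<integral>\<^sup>+x. G x \<partial>lborel)"
proof -
  have "ennreal (l^DIM('a)) * (\<integral>\<^sup>+x. F x \<partial>lborel) \<le> ennreal (l^DIM('a)) * (\<integral>\<^sup>+x. G (t + l *\<^sub>R x) \<partial>lborel)"
    by (intro mult_left_mono nn_integral_mono le) auto
  also have "\<dots> = (\<integral>\<^sup>+x. G x \<partial>lborel)"
    using nn_integral_eucl_affine[of G l t] l by simp
  finally show ?thesis .
qed

lemma logconc_ineq:
  assumes "log_concave_density \<rho>" "0 < \<rho> a" "0 < \<rho> b" "0 \<le> l" "l \<le> 1"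
  shows "\<rho> ((1 - l) *\<^sub>R a + l *\<^sub>R b) \<ge> \<rho> a powr (1 - l) * \<rho> b powr l"
proof -
  have cv: "convex_on {x. 0 < \<rho> x} (\<lambda>x. - ln (\<rho> x))" and cs: "convex {x. 0 < \<rho> x}"
    using assms(1) unfolding log_concave_density_def by auto
  have pos: "0 < \<rho> ((1 - l) *\<^sub>R a + l *\<^sub>R b)"
    using convexD[OF cs, of a b "1-l" l] assms by auto
  have "- ln (\<rho> ((1 - l) *\<^sub>R a + l *\<^sub>R b)) \<le> (1-l) * (- ln (\<rho> a)) + l * (- ln (\<rho> b))"
    using convex_onD[OF cv, of l a b] assms by auto
  hence "(1-l) * ln (\<rho> a) + l * ln (\<rho> b) \<le> ln (\<rho> ((1 - l) *\<^sub>R a + l *\<^sub>R b))" by simp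
  hence "exp ((1-l) * ln (\<rho> a) + l * ln (\<rho> b)) \<le> \<rho> ((1 - l) *\<^sub>R a + l *\<^sub>R b)"
    using pos by (metis exp_le_cancel_iff exp_ln)
  thus ?thesis using assms by (simp add: powr_def exp_add mult.commute)
qed

lemma logconc_bounded:
  fixes \<rho> :: "'a::euclidean_space \<Rightarrow> real"
  assumes lc: "log_concave_density \<rho>" and tot: "(\<integral>\<^sup>+x. ennreal (\<rho> x) \<partial>lborel) = 1"
  shows "bdd_above (range \<rho>)"
proof -
  have meas[measurable]: "\<rho> \<in> borel_measurable borel" and nn: "\<And>x. 0 \<le> \<rho> x"
    using lc unfolding log_concave_density_def by auto
  define m where "m = (\<lambda>x. min (\<rho> x) 1)"
  have mm[measurable]: "m \<in> borel_measurable borel" unfolding m_def by measurable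
  have int: "integrable lborel \<rho>"
    by (rule integrableI_nonneg) (use tot nn in auto)
  have intm: "integrable lborel m"
    by (rule Bochner_Integration.integrable_bound[OF int]) (auto simp: m_def nn)
  have mnn: "\<And>x. 0 \<le> m x" using nn by (simp add: m_def)
  define c where "c = integral\<^sup>L lborel m"
  have cpos: "0 < c"
  proof (rule ccontr)
    assume "\<not> 0 < c"
    moreover have "0 \<le> c" unfolding c_def by (rule integral_nonneg_AE) (use mnn in auto)
    ultimately have "c = 0" by simp
    hence "AE x in lborel. m x = 0"
      using integral_nonneg_eq_0_iff_AE[OF intm] mnn c_def by auto
    hence "AE x in lborel. \<rho> x = 0"
      by eventually_elim (use nn in \<open>auto simp: m_def min_def split: if_splits\<close>)
    hence "(\<integral>\<^sup>+x. ennreal (\<rho> x) \<partial>lborel) = 0"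
      by (subst nn_integral_0_iff_AE) (auto elim!: eventually_mono)
    thus False using tot by simp
  qed
  have "\<rho> y \<le> (2^DIM('a) / c)^2" for y
  proof (cases "\<rho> y > 0")
    case False thus ?thesis using nn[of y] by auto
  next
    case True
    let ?A = "\<rho> y"
    have pw: "ennreal (sqrt ?A * m w) \<le> ennreal (\<rho> ((1/2) *\<^sub>R y + (1/2) *\<^sub>R w))" for w
    proof (cases "\<rho> w > 0")
      case False thus ?thesis using nn[of w] nn by (auto simp: m_def)
    next
      case True
      have h0: "\<rho> ((1 - 1/2) *\<^sub>R y + (1/2) *\<^sub>R w) \<ge> ?A powr (1 - 1/2) * \<rho> w powr (1/2)"
        by (rule logconc_ineq[OF lc]) (use True \<open>0 < \<rho> y\<close> in auto)
      have e1: "?A powr (1/2) = sqrt ?A" using \<open>0 < \<rho> y\<close> by (simp add: powr_half_sqrt)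
      have e2: "(1 - 1/2::real) = 1/2" by simp
      have h1: "\<rho> ((1/2) *\<^sub>R y + (1/2) *\<^sub>R w) \<ge> sqrt ?A * \<rho> w powr (1/2)"
        using h0 unfolding e2 e1 .
      have h2: "\<rho> w powr (1/2) \<ge> m w"
      proof -
        have "\<rho> w powr (1/2) = sqrt (\<rho> w)" using True by (simp add: powr_half_sqrt)
        moreover have "sqrt (\<rho> w) \<ge> min (\<rho> w) 1"
        proof (cases "\<rho> w \<le> 1")
          case True
          hence "\<rho> w \<le> sqrt (\<rho> w)" using nn[of w]
            by (intro real_le_rsqrt) (simp add: power2_eq_square mult_left_le)
          thus ?thesis by simp
        qed auto
        ultimately show ?thesis by (simp add: m_def)
      qed
      have "sqrt ?A * m w \<le> sqrt ?A * \<rho> w powr (1/2)"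
        using h2 nn[of y] by (intro mult_left_mono) auto
      also have "\<dots> \<le> \<rho> ((1/2) *\<^sub>R y + (1/2) *\<^sub>R w)" using h1 .
      finally have "sqrt ?A * m w \<le> \<rho> ((1/2) *\<^sub>R y + (1/2) *\<^sub>R w)" .
      thus ?thesis by (rule ennreal_leI)
    qed
    have "ennreal ((1/2)^DIM('a)) * (\<integral>\<^sup>+w. ennreal (sqrt ?A * m w) \<partial>lborel) \<le> (\<integral>\<^sup>+x. ennreal (\<rho> x) \<partial>lborel)"
      by (rule scale_le) (use pw in auto)
    moreover have "(\<integral>\<^sup>+w. ennreal (sqrt ?A * m w) \<partial>lborel) = ennreal (sqrt ?A * c)"
      unfolding c_def
      by (subst nn_integral_eq_integral) (use intm mnn nn[of y] in auto)
    ultimately have "ennreal ((1/2)^DIM('a) * (sqrt ?A * c)) \<le> ennreal 1"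
      using tot by (simp add: ennreal_mult' cpos)
    hence le1: "(1/2)^DIM('a) * (sqrt ?A * c) \<le> 1"
      by (subst (asm) ennreal_le_iff) (auto simp: cpos less_imp_le)
    hence "sqrt ?A \<le> 2^DIM('a) / c" using cpos
      by (simp add: field_simps power_divide)
    hence "(sqrt ?A)^2 \<le> (2^DIM('a) / c)^2"
      using nn[of y] by (intro power_mono) auto
    thus ?thesis using nn[of y] by simp
  qed
  thus ?thesis by (intro bdd_aboveI[where M="(2^DIM('a) / c)^2"]) auto
qed



lemma I_lower:
  fixes n :: nat and \<tau> :: real
  assumes n: "1 \<le> n" and tau: "0 < \<tau>"
  shows "exp (- \<tau>) * (1/\<tau> + (real n - 1)/\<tau>^2) \<le> (LBINT t:{1..}. t ^ (n - 1) * exp (- \<tau> * t))"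
proof -
  define F where "F = (\<lambda>t::real. indicator {1..} t *\<^sub>R (t ^ (n - 1) * exp (- \<tau> * t)))"
  have Fm[measurable]: "F \<in> borel_measurable borel" unfolding F_def by measurable
  have Fnn: "\<And>t. 0 \<le> F t" unfolding F_def by (auto simp: indicator_def)
  define c where "c = fact (n-1) / \<tau>^n"
  have cpos: "0 < c" using tau by (simp add: c_def)
  have erl: "\<And>t. F t \<le> c * erlang_density (n-1) \<tau> t"
  proof -
    fix t :: real
    show "F t \<le> c * erlang_density (n-1) \<tau> t"
    proof (cases "t \<ge> 1")
      case True
      have "Suc (n-1) = n" using n by simp
      thus ?thesis using True tau unfolding F_def c_def erlang_density_def
        by (auto simp: field_simps)
    qed (auto simp: F_def cpos tau less_imp_le)
  qed
  have "(\<integral>\<^sup>+t. ennreal (F t) \<partial>lborel) \<le> (\<integral>\<^sup>+t. ennreal c * ennreal (erlang_density (n-1) \<tau> t) \<partial>lborel)"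
    by (intro nn_integral_mono) (use erl cpos tau in \<open>auto simp: ennreal_mult[symmetric] intro!: ennreal_leI\<close>)
  also have "\<dots> = ennreal c * (\<integral>\<^sup>+t. ennreal (erlang_density (n-1) \<tau> t) \<partial>lborel)"
    by (rule nn_integral_cmult) auto
  also have "(\<integral>\<^sup>+t. ennreal (erlang_density (n-1) \<tau> t) \<partial>lborel) = 1"
    using nn_integral_erlang_ith_moment[OF tau, of "n-1" 0] by simp
  finally have le: "(\<integral>\<^sup>+t. ennreal (F t) \<partial>lborel) \<le> ennreal c" by simp
  have fin: "(\<integral>\<^sup>+t. ennreal (F t) \<partial>lborel) < \<infinity>"
    using le by (rule le_less_trans) simp
  have intF: "integrable lborel F"
    by (rule integrableI_nonneg) (use fin Fnn in auto)
  have Ieq: "(LBINT t:{1..}. t ^ (n - 1) * exp (- \<tau> * t)) = integral\<^sup>L lborel F"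
    unfolding set_lebesgue_integral_def F_def ..
  have "ennreal (integral\<^sup>L lborel F) = (\<integral>\<^sup>+t. ennreal (F t) \<partial>lborel)"
    by (rule nn_integral_eq_integral[symmetric]) (use intF Fnn in auto)
  also have "\<dots> = ennreal (\<bar>1\<bar>) * (\<integral>\<^sup>+x. ennreal (F (1 + 1 * x)) \<partial>lborel)"
    by (rule nn_integral_real_affine) auto
  also have "\<dots> = (\<integral>\<^sup>+x. ennreal (F (1 + x)) \<partial>lborel)" by simp
  also have "\<dots> \<ge> (\<integral>\<^sup>+x. ennreal (exp (-\<tau>) / \<tau>) * ennreal (erlang_density 0 \<tau> x * x ^ 0)
        + ennreal (exp (-\<tau>) * (real n - 1) / \<tau>) * ennreal (erlang_density 0 \<tau> x * x ^ 1) \<partial>lborel)"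
  proof (intro nn_integral_mono)
    fix x :: real
    show "ennreal (exp (-\<tau>) / \<tau>) * ennreal (erlang_density 0 \<tau> x * x ^ 0)
        + ennreal (exp (-\<tau>) * (real n - 1) / \<tau>) * ennreal (erlang_density 0 \<tau> x * x ^ 1) \<le> ennreal (F (1 + x))"
    proof (cases "x \<ge> 0")
      case False
      thus ?thesis by (simp add: erlang_density_def)
    next
      case True
      have b: "1 + real (n-1) * x \<le> (1 + x) ^ (n-1)"
        by (rule Bernoulli_inequality) (use True in auto)
      have rn: "real (n-1) = real n - 1" using n by simp
      have "exp (-\<tau>) / \<tau> * (\<tau> * exp (-\<tau> * x)) + exp (-\<tau>) * (real n - 1) / \<tau> * (\<tau> * exp (-\<tau> * x) * x)
          = exp (-\<tau>) * exp (-\<tau> * x) * (1 + real (n-1) * x)"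
        using tau rn by (simp add: field_simps)
      also have "\<dots> \<le> exp (-\<tau>) * exp (-\<tau> * x) * (1 + x) ^ (n-1)"
        by (intro mult_left_mono b) auto
      also have "\<dots> = F (1 + x)"
        using True by (simp add: F_def field_simps exp_add[symmetric])
      finally have "exp (-\<tau>) / \<tau> * (\<tau> * exp (-\<tau> * x)) + exp (-\<tau>) * (real n - 1) / \<tau> * (\<tau> * exp (-\<tau> * x) * x) \<le> F (1 + x)" .
      moreover have "0 \<le> exp (-\<tau>) * (real n - 1) / \<tau>" using n tau by simp
      moreover have hn: "0 \<le> real n - 1" using n by simp
      ultimately show ?thesis using True tau
        apply (simp add: erlang_density_def ennreal_mult[symmetric] del: ennreal_plus)
        apply (subst ennreal_plus[symmetric])
        prefer 3 apply (rule ennreal_leI) apply assumption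
        apply (simp_all add: hn True)
        done
    qed
  qed
  also have "(\<integral>\<^sup>+x. ennreal (exp (-\<tau>) / \<tau>) * ennreal (erlang_density 0 \<tau> x * x ^ 0)
        + ennreal (exp (-\<tau>) * (real n - 1) / \<tau>) * ennreal (erlang_density 0 \<tau> x * x ^ 1) \<partial>lborel)
      = ennreal (exp (-\<tau>) / \<tau>) * (\<integral>\<^sup>+x. ennreal (erlang_density 0 \<tau> x * x ^ 0) \<partial>lborel)
        + ennreal (exp (-\<tau>) * (real n - 1) / \<tau>) * (\<integral>\<^sup>+x. ennreal (erlang_density 0 \<tau> x * x ^ 1) \<partial>lborel)"
    by (simp add: nn_integral_add nn_integral_cmult)
  also have "\<dots> = ennreal (exp (-\<tau>) / \<tau>) * 1 + ennreal (exp (-\<tau>) * (real n - 1) / \<tau>) * ennreal (1 / \<tau>)"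
    using nn_integral_erlang_ith_moment[OF tau, of 0 0] nn_integral_erlang_ith_moment[OF tau, of 0 1]
    by (simp add: divide_ennreal tau)
  also have "\<dots> = ennreal (exp (-\<tau>) * (1/\<tau> + (real n - 1)/\<tau>^2))"
    using tau n by (simp add: ennreal_mult[symmetric] ennreal_plus[symmetric] field_simps power2_eq_square del: ennreal_plus)
  finally have "ennreal (exp (-\<tau>) * (1/\<tau> + (real n - 1)/\<tau>^2)) \<le> ennreal (integral\<^sup>L lborel F)" .
  hence "exp (-\<tau>) * (1/\<tau> + (real n - 1)/\<tau>^2) \<le> integral\<^sup>L lborel F"
    by (subst (asm) ennreal_le_iff) (auto intro!: integral_nonneg_AE simp: Fnn)
  thus ?thesis unfolding Ieq .
qed



lemma a_le_e: "1 \<le> n \<Longrightarrow> ((real n + 1) / real n) ^ n \<le> exp 1"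
proof -
  assume n: "1 \<le> n"
  have "(real n + 1) / real n = 1 + 1 / real n" using n by (simp add: field_simps)
  also have "\<dots> \<le> exp (1 / real n)" by (rule exp_ge_add_one_self)
  finally have "((real n + 1) / real n) ^ n \<le> exp (1 / real n) ^ n"
    by (intro power_mono) (use n in auto)
  also have "\<dots> = exp (real n * (1 / real n))" by (rule exp_of_nat_mult[symmetric])
  also have "\<dots> = exp 1" using n by simp
  finally show ?thesis .
qed

lemma final_num:
  fixes n :: nat and \<tau> I :: real
  assumes n: "1 \<le> n" and tau: "0 < \<tau>" and I: "exp (- \<tau>) * (1/\<tau> + (real n - 1)/\<tau>^2) \<le> I"
  shows "((real n + 1) / real n) ^ n * exp (\<tau> / (real n + 1)) \<le> (real n * I + 1) * exp \<tau>"
proof -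
  define R where "R = exp \<tau> + real n / \<tau> + real n * (real n - 1) / \<tau>^2"
  have "exp \<tau> * (exp (- \<tau>) * (1/\<tau> + (real n - 1)/\<tau>^2)) \<le> exp \<tau> * I"
    using I by (intro mult_left_mono) auto
  moreover have "exp \<tau> * (exp (- \<tau>) * (1/\<tau> + (real n - 1)/\<tau>^2)) = 1/\<tau> + (real n - 1)/\<tau>^2"
    by (simp add: mult.assoc[symmetric] exp_minus_inverse)
  ultimately have "1/\<tau> + (real n - 1)/\<tau>^2 \<le> exp \<tau> * I" by simp
  hence "real n * (1/\<tau> + (real n - 1)/\<tau>^2) \<le> real n * (exp \<tau> * I)"
    by (intro mult_left_mono) auto
  hence RI: "R \<le> (real n * I + 1) * exp \<tau>"
    unfolding R_def by (simp add: field_simps)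
  have "((real n + 1) / real n) ^ n * exp (\<tau> / (real n + 1)) \<le> R"
  proof (cases "n = 1")
    case True
    define y where "y = exp (\<tau> / 2)"
    have ey: "exp \<tau> = y^2" unfolding y_def by (simp add: power2_eq_square exp_add[symmetric])
    have y1: "1 + \<tau>/2 \<le> y" unfolding y_def by (rule exp_ge_add_one_self)
    have "\<tau>^2/4 \<le> (y - 1)^2"
    proof -
      have "(\<tau>/2)^2 \<le> (y-1)^2" using y1 tau by (intro power_mono) auto
      thus ?thesis by (simp add: power2_eq_square)
    qed
    moreover have "1 - \<tau>^2/4 \<le> 1/\<tau>"
    proof -
      have "\<tau> * (1 - \<tau>^2/4) \<le> 1"
      proof -
        have "0 \<le> \<tau> * (\<tau> - 6/5)^2 + (12/5 * \<tau>^2 - 136/25 * \<tau> + 4)"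
        proof -
          have "0 \<le> \<tau> * (\<tau> - 6/5)^2" using tau by simp
          moreover have "0 \<le> 12/5 * \<tau>^2 - 136/25 * \<tau> + 4"
          proof -
            have "12/5 * \<tau>^2 - 136/25 * \<tau> + 4 = 12/5 * (\<tau> - 34/30)^2 + 1032/1125"
              by (simp add: power2_eq_square field_simps)
            moreover have "0 \<le> 12/5 * (\<tau> - 34/30)^2" by simp
            ultimately show ?thesis by simp
          qed
          ultimately show ?thesis by simp
        qed
        thus ?thesis by (simp add: power2_eq_square power3_eq_cube algebra_simps)
      qed
      thus ?thesis using tau by (simp add: field_simps)
    qed
    ultimately have "2 * y \<le> y^2 + 1/\<tau>" by (simp add: power2_eq_square algebra_simps)
    thus ?thesis using True unfolding R_def ey y_def by simp
  next
    case False
    hence n2: "2 \<le> n" using n by simp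
    have ae: "((real n + 1) / real n) ^ n \<le> exp 1" by (rule a_le_e[OF n])
    have apos: "0 \<le> ((real n + 1) / real n) ^ n" by simp
    show ?thesis
    proof (cases "\<tau> \<ge> (real n + 1) / real n")
      case True
      have "1 \<le> \<tau> * real n / (real n + 1)" using True n by (simp add: field_simps)
      hence "exp 1 \<le> exp (\<tau> * real n / (real n + 1))" by simp
      hence "((real n + 1) / real n) ^ n \<le> exp (\<tau> * real n / (real n + 1))" using ae by linarith
      hence "((real n + 1) / real n) ^ n * exp (\<tau> / (real n + 1)) \<le> exp (\<tau> * real n / (real n + 1)) * exp (\<tau> / (real n + 1))"
        by (rule mult_right_mono) simp
      also have "\<dots> = exp \<tau>"
        by (simp add: exp_add[symmetric] add_divide_distrib[symmetric] field_simps)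
      also have "\<dots> \<le> R" unfolding R_def using tau n by simp
      finally show ?thesis .
    next
      case False
      hence lt: "\<tau> * real n < real n + 1" using n2 by (simp add: field_simps)
      have t32: "\<tau> \<le> 3/2"
      proof (rule ccontr)
        assume "\<not> \<tau> \<le> 3/2"
        hence "3/2 * real n \<le> \<tau> * real n" by (intro mult_right_mono) auto
        moreover have "real n + 1 \<le> 3/2 * real n" using n2 by simp
        ultimately show False using lt by linarith
      qed
      have "\<tau> / (real n + 1) \<le> 1/2" using t32 n2 tau by (simp add: field_simps)
      hence "exp (\<tau> / (real n + 1)) \<le> exp (1/2)" by simp
      hence "((real n + 1) / real n) ^ n * exp (\<tau> / (real n + 1)) \<le> exp 1 * exp (1/2)"
        using ae by (intro mult_mono) auto
      also have "\<dots> \<le> 46/10"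
      proof -
        have h: "exp (1/2::real) * exp (1/2) = exp 1" by (simp add: exp_add[symmetric])
        have "(exp 1 * exp (1/2::real))^2 = exp 1 * exp 1 * (exp (1/2) * exp (1/2::real))"
          by (simp add: power2_eq_square mult_ac)
        also have "\<dots> = exp 1 ^ 3" unfolding h by (simp add: power3_eq_cube)
        also have "\<dots> \<le> (272/100)^3" using e_less_272 by (intro power_mono) auto
        also have "\<dots> \<le> (46/10)^2" by (simp add: power3_eq_cube power2_eq_square)
        finally have "(exp 1 * exp (1/2::real))^2 \<le> (46/10)^2" .
        thus ?thesis by (rule power2_le_imp_le) simp
      qed
      also have "\<dots> \<le> 1 + \<tau> + 2/\<tau> + 2/\<tau>^2"
      proof -
        have a1: "14/5 \<le> \<tau> + 2/\<tau>"
        proof -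
          have "0 \<le> (\<tau> - 7/5)^2 + 1/25" by simp
          hence "14/5 * \<tau> \<le> \<tau>^2 + 2" by (simp add: power2_eq_square algebra_simps)
          thus ?thesis using tau by (simp add: field_simps power2_eq_square)
        qed
        have a2: "8/9 \<le> 2/\<tau>^2"
        proof -
          have "\<tau>^2 \<le> (3/2)^2" using t32 tau by (intro power_mono) auto
          thus ?thesis using tau by (simp add: field_simps)
        qed
        show ?thesis using a1 a2 by simp
      qed
      also have "\<dots> \<le> R"
      proof -
        have "1 + \<tau> \<le> exp \<tau>" by (rule exp_ge_add_one_self)
        moreover have "2/\<tau> \<le> real n / \<tau>" using n2 tau by (simp add: divide_right_mono)
        moreover have "2/\<tau>^2 \<le> real n * (real n - 1) / \<tau>^2"
        proof -
          have "(2::real) \<le> real n * (real n - 1)"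
          proof -
            have "(2::real) * 1 \<le> real n * (real n - 1)" using n2 by (intro mult_mono) auto
            thus ?thesis by simp
          qed
          thus ?thesis using tau by (simp add: divide_right_mono)
        qed
        ultimately show ?thesis unfolding R_def by linarith
      qed
      finally show ?thesis .
    qed
  qed
  thus ?thesis using RI by simp
qed


theorem lemma3p2:
  fixes \<rho> :: "'a::euclidean_space \<Rightarrow> real" and \<tau> :: real
  assumes tau_pos: "0 < \<tau>"
    and logconc: "log_concave_density \<rho>"
    and prob: "prob_space (density lborel (\<lambda>x. ennreal (\<rho> x)))"
    and iso: "isotropic_with_const (density lborel (\<lambda>x. ennreal (\<rho> x))) 1"
    and x_in_K: "\<rho> x \<ge> exp (- \<tau>) * (SUP y. \<rho> y)"
  shows "(norm x)\<^sup>2 \<le>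
     (real DIM('a) * (LBINT t:{1..}. t ^ (DIM('a) - 1) * exp (- \<tau> * t)) + 1)
       * (real DIM('a) + 1)\<^sup>2 * exp \<tau>"
proof -
  define n where "n = DIM('a)"
  have n1: "1 \<le> n" unfolding n_def using DIM_positive[where 'a='a] by linarith
  define I where "I = (LBINT t:{1..}. t ^ (n - 1) * exp (- \<tau> * t))"
  have meas[measurable]: "\<rho> \<in> borel_measurable borel" and nn: "\<And>x. 0 \<le> \<rho> x"
    using logconc unfolding log_concave_density_def by auto
  have "emeasure (density lborel (\<lambda>x. ennreal (\<rho> x))) (space (density lborel (\<lambda>x. ennreal (\<rho> x)))) = 1"
    using prob_space.emeasure_space_1[OF prob] .
  hence tot: "(\<integral>\<^sup>+x. ennreal (\<rho> x) \<partial>lborel) = 1"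
    by (simp add: emeasure_density)
  have bdd: "bdd_above (range \<rho>)" by (rule logconc_bounded[OF logconc tot])
  define m where "m = (SUP y. \<rho> y)"
  have le_m: "\<And>y. \<rho> y \<le> m" unfolding m_def using bdd by (auto intro: cSup_upper)
  obtain y0 where y0: "0 < \<rho> y0"
  proof (rule ccontr)
    assume "\<not> thesis"
    have "\<rho> y = 0" for y
    proof (rule ccontr)
      assume "\<rho> y \<noteq> 0"
      hence "0 < \<rho> y" using nn[of y] by linarith
      thus False using that \<open>\<not> thesis\<close> by blast
    qed
    hence "(\<integral>\<^sup>+x. ennreal (\<rho> x) \<partial>lborel) = 0" by simp
    thus False using tot by simp
  qed
  have mpos: "0 < m" using le_m[of y0] y0 by linarith
  have xK: "exp (- \<tau>) * m \<le> \<rho> x" using x_in_K unfolding m_def .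
  have xpos: "0 < \<rho> x" using xK mpos by (smt (verit) exp_gt_zero mult_pos_pos)
  have isox: "integrable (density lborel (\<lambda>x. ennreal (\<rho> x))) (\<lambda>y. y \<bullet> x)"
    "(\<integral>y. y \<bullet> x \<partial>density lborel (\<lambda>x. ennreal (\<rho> x))) = 0"
    "integrable (density lborel (\<lambda>x. ennreal (\<rho> x))) (\<lambda>y. (y \<bullet> x)\<^sup>2)"
    "(\<integral>y. (y \<bullet> x)\<^sup>2 \<partial>density lborel (\<lambda>x. ennreal (\<rho> x))) = 1\<^sup>2 * (norm x)\<^sup>2"
    using iso unfolding isotropic_with_const_def by auto
  have int1: "integrable lborel (\<lambda>y. \<rho> y * (y \<bullet> x))"
    using isox(1) by (subst (asm) integrable_density) (auto simp: nn)
  have int2: "integrable lborel (\<lambda>y. \<rho> y * (y \<bullet> x)\<^sup>2)"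
    using isox(3) by (subst (asm) integrable_density) (auto simp: nn)
  have J1: "integral\<^sup>L lborel (\<lambda>y. \<rho> y * (y \<bullet> x)) = 0"
    using isox(2) by (subst (asm) integral_density) (auto simp: nn)
  define M2 where "M2 = (norm x)\<^sup>2"
  have J2: "integral\<^sup>L lborel (\<lambda>y. \<rho> y * (y \<bullet> x)\<^sup>2) = M2"
    using isox(4) unfolding M2_def by (subst (asm) integral_density) (auto simp: nn)
  have int0: "integrable lborel \<rho>"
    by (rule integrableI_nonneg) (use tot nn in auto)
  have "ennreal (integral\<^sup>L lborel \<rho>) = 1"
    using tot by (subst nn_integral_eq_integral[symmetric]) (auto simp: int0 nn)
  hence J0: "integral\<^sup>L lborel \<rho> = 1"
    by (metis ennreal_1 ennreal_inj integral_nonneg_AE nn AE_I2 zero_le_one)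
  define l where "l = real n / (real n + 1)"
  have l0: "0 < l" and l1: "l < 1" using n1 unfolding l_def by (auto simp: field_simps)
  define E where "E = exp (- \<tau> * (1 - l))"
  have Epos: "0 < E" unfolding E_def by simp
  define t where "t = (1 - l) *\<^sub>R x"
  define R where "R = (\<lambda>y. E * ((1-l)^2 * M2^2 * \<rho> y + 2 * (1-l) * l * M2 * (\<rho> y * (y \<bullet> x))
      + l^2 * (\<rho> y * (y \<bullet> x)\<^sup>2)))"
  define G where "G = (\<lambda>z. \<rho> z * (z \<bullet> x)\<^sup>2)"
  have Gm[measurable]: "G \<in> borel_measurable borel" unfolding G_def by measurable
  have Gnn: "\<And>z. 0 \<le> G z" unfolding G_def using nn by simp
  have dens: "E * \<rho> y \<le> \<rho> (t + l *\<^sub>R y)" for y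
  proof (cases "\<rho> y > 0")
    case False thus ?thesis using nn[of y] nn[of "t + l *\<^sub>R y"] Epos by simp
  next
    case True
    have h0: "\<rho> x powr (1 - l) * \<rho> y powr l \<le> \<rho> ((1 - l) *\<^sub>R x + l *\<^sub>R y)"
      by (rule logconc_ineq[OF logconc xpos True]) (use l0 l1 in auto)
    have h1: "(exp (- \<tau>) * m) powr (1 - l) \<le> \<rho> x powr (1 - l)"
      by (rule powr_mono2) (use l1 xK mpos in auto)
    have h2: "(exp (- \<tau>) * m) powr (1 - l) = E * m powr (1 - l)"
      unfolding E_def using mpos by (simp add: powr_mult exp_powr_real)
    have h3: "\<rho> y powr l = \<rho> y * \<rho> y powr (l - 1)"
      using powr_add[of "\<rho> y" 1 "l - 1"] True by simp
    have h4: "m powr (l - 1) \<le> \<rho> y powr (l - 1)"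
      by (rule powr_mono2') (use l1 True le_m in auto)
    have h5: "m powr (1 - l) * m powr (l - 1) = 1"
      using powr_add[of m "1 - l" "l - 1"] mpos by simp
    have "E * \<rho> y = E * \<rho> y * (m powr (1 - l) * m powr (l - 1))" using h5 by simp
    also have "\<dots> = (E * m powr (1 - l)) * (\<rho> y * m powr (l - 1))" by (simp add: mult_ac)
    also have "\<dots> \<le> \<rho> x powr (1 - l) * (\<rho> y * \<rho> y powr (l - 1))"
      using h1 h2 h4 True Epos mpos
      by (intro mult_mono mult_left_mono) (auto simp: less_imp_le)
    also have "\<dots> = \<rho> x powr (1 - l) * \<rho> y powr l" using h3 by simp
    also have "\<dots> \<le> \<rho> (t + l *\<^sub>R y)" using h0 unfolding t_def .
    finally show ?thesis .
  qed
  have Rform: "R y = E * \<rho> y * ((1 - l) * M2 + l * (y \<bullet> x))\<^sup>2" for y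
    unfolding R_def by (simp add: power2_eq_square algebra_simps)
  have pw: "R y \<le> G (t + l *\<^sub>R y)" for y
  proof -
    have ip: "(t + l *\<^sub>R y) \<bullet> x = (1 - l) * M2 + l * (y \<bullet> x)"
      unfolding t_def M2_def by (simp add: inner_add_left power2_norm_eq_inner)
    have "R y = E * \<rho> y * ((1 - l) * M2 + l * (y \<bullet> x))\<^sup>2"
      unfolding R_def by (simp add: power2_eq_square algebra_simps)
    also have "\<dots> \<le> \<rho> (t + l *\<^sub>R y) * ((1 - l) * M2 + l * (y \<bullet> x))\<^sup>2"
      by (rule mult_right_mono[OF dens]) simp
    also have "\<dots> = G (t + l *\<^sub>R y)" unfolding G_def ip ..
    finally show ?thesis .
  qed
  have intR: "integrable lborel R"
    unfolding R_def using int0 int1 int2 by auto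
  have JR: "integral\<^sup>L lborel R = E * ((1-l)^2 * M2^2 + l^2 * M2)"
    unfolding R_def using int0 int1 int2 J0 J1 J2 by simp
  have Rnn: "\<And>y. 0 \<le> R y" unfolding Rform using Epos nn by (simp add: less_imp_le)
  have "ennreal (l ^ DIM('a)) * (\<integral>\<^sup>+y. ennreal (R y) \<partial>lborel) \<le> (\<integral>\<^sup>+z. ennreal (G z) \<partial>lborel)"
    by (rule scale_le[where t=t]) (use l0 pw in \<open>auto intro: ennreal_leI\<close>)
  moreover have "(\<integral>\<^sup>+y. ennreal (R y) \<partial>lborel) = ennreal (integral\<^sup>L lborel R)"
    by (rule nn_integral_eq_integral) (use intR Rnn in auto)
  moreover have "(\<integral>\<^sup>+z. ennreal (G z) \<partial>lborel) = ennreal M2"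
    using nn_integral_eq_integral[of lborel G] int2 J2 Gnn unfolding G_def by auto
  ultimately have "ennreal (l ^ n * (E * ((1-l)^2 * M2^2 + l^2 * M2))) \<le> ennreal M2"
    unfolding JR n_def using l0 Epos by (simp add: ennreal_mult')
  hence key: "l ^ n * (E * ((1-l)^2 * M2^2 + l^2 * M2)) \<le> M2"
    by (subst (asm) ennreal_le_iff) (auto simp: M2_def)
  have Ilow: "exp (- \<tau>) * (1/\<tau> + (real n - 1)/\<tau>^2) \<le> I"
    unfolding I_def by (rule I_lower[OF n1 tau_pos])
  have fin: "((real n + 1) / real n) ^ n * exp (\<tau> / (real n + 1)) \<le> (real n * I + 1) * exp \<tau>"
    by (rule final_num[OF n1 tau_pos Ilow])
  have goal: "M2 \<le> (real n * I + 1) * (real n + 1)\<^sup>2 * exp \<tau>"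
  proof (cases "M2 = 0")
    case True
    have "0 \<le> I" using Ilow n1 tau_pos
      by (smt (verit) divide_nonneg_nonneg exp_gt_zero mult_nonneg_nonneg of_nat_1 of_nat_mono zero_le_power2 zero_less_divide_1_iff)
    thus ?thesis using True by simp
  next
    case False
    hence M2pos: "0 < M2" unfolding M2_def by simp
    have "l ^ n * E * (1-l)^2 * M2 * M2 \<le> l ^ n * (E * ((1-l)^2 * M2^2 + l^2 * M2))"
      using l0 Epos M2pos by (simp add: power2_eq_square algebra_simps)
    also have "\<dots> \<le> M2 * 1" using key by simp
    finally have "(l ^ n * E * (1-l)^2 * M2) * M2 \<le> 1 * M2" by (simp add: mult_ac)
    hence k2: "l ^ n * E * (1-l)^2 * M2 \<le> 1" using M2pos by (rule mult_right_le_imp_le)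
    have cpos: "0 < l ^ n * E * (1-l)^2" using l0 l1 Epos by simp
    have "M2 \<le> 1 / (l ^ n * E * (1-l)^2)"
      using k2 cpos by (simp add: field_simps mult_ac)
    also have "1 / (l ^ n * E * (1-l)^2) = (real n + 1)^2 * (((real n + 1) / real n) ^ n * exp (\<tau> / (real n + 1)))"
    proof -
      have a: "1 - l = 1 / (real n + 1)" unfolding l_def using n1 by (simp add: field_simps)
      have b: "1 / l ^ n = ((real n + 1) / real n) ^ n" unfolding l_def using n1 by (simp add: power_divide)
      have c: "1 / E = exp (\<tau> / (real n + 1))" unfolding E_def a by (simp add: exp_minus field_simps)
      have "1 / (l ^ n * E * (1-l)^2) = (1 / l ^ n) * (1 / E) * (1 / (1 - l)^2)" by simp
      also have "\<dots> = ((real n + 1) / real n) ^ n * exp (\<tau> / (real n + 1)) * (real n + 1)^2"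
        unfolding b c a by (simp add: power_divide)
      finally show ?thesis by simp
    qed
    also have "\<dots> \<le> (real n + 1)^2 * ((real n * I + 1) * exp \<tau>)"
      by (rule mult_left_mono[OF fin]) simp
    finally show ?thesis by (simp add: mult_ac)
  qed
  thus ?thesis unfolding M2_def I_def n_def .
qed

end
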